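(* Let $q$ be a prime power and $k\ge3$, $h\ge2$ integers, and $1\le u_0<u_1\le\dots\le u_h$ integers. Let $U_0,U_1,\dots,U_h$ be subspaces of $\mathbf F_q^k$ of dimensions $u_0,u_1,\dots,u_h$ with $U_i\cap U_j=U_0$ for all distinct $i,j\in\{1,\dots,h\}$, and assume $q^k-q^{k-1}>q^{u_0}-1+\sum_{i=1}^h(q^{u_i}-q^{u_0})$. Let $U$ be the set of nonzero vectors of $\mathbf F_q^k$ not in $U_1\cup\dots\cup U_h$, let $\widetilde G$ be a matrix whose columns consist of exactly one representative of each class $\{\lambda\mathbf v:\lambda\in\mathbf F_q^*\}$, $\mathbf v\in U$, and let $\mathbf C$ be the linear code with generator matrix $\widetilde G$. 1) If $u_1=\dots=u_{s_1}<u_{s_1+1}=\dots=u_{s_1+s_2}<\dots<u_{s_1+\dots+s_{t-1}+1}=\dots=u_{s_1+\dots+s_t}$ with $1\le s_i<q$ for $i=1,\dots,t$ and $h=s_1+\dots+s_t$, then the Griesmer defect of $\mathbf C$ is at most $(h-1)\frac{q^{u_0}-1}{q-1}$. 2) If $u_1=\dots=u_h=u$, then the Griesmer defect of $\mathbf C$ is at most $(h-1)\frac{q^{u_0}-1}{q-1}+\sum_{i=1}^{k-u}\lfloor h/q^i\rfloor$.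
   Context: For a linear $[n,k,d]_q$ code, $g_q(k,d)=\sum_{i=0}^{k-1}\lceil d/q^i\rceil$ and the Griesmer defect is $n-g_q(k,d)$. *)

theory Defs
  imports "HOL-Analysis.Analysis" "HOL-Library.Function_Algebras"
begin

text \<open>Words of length n over a field are modelled as functions nat => 'a
  (only the coordinates 0..n-1 matter; generated codes vanish outside).
  The pointwise vector space structure on functions:\<close>

definition fscale :: "'a::field \<Rightarrow> (nat \<Rightarrow> 'a) \<Rightarrow> (nat \<Rightarrow> 'a)" where
  "fscale c f = (\<lambda>i. c * f i)"

interpretation fvs: vector_space "fscale :: 'a::field \<Rightarrow> (nat \<Rightarrow> 'a) \<Rightarrow> (nat \<Rightarrow> 'a)"
  by unfold_locales (auto simp: fscale_def algebra_simps fun_eq_iff)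

definition dotp :: "'a::field ^ 'n \<Rightarrow> 'a ^ 'n \<Rightarrow> 'a" where
  "dotp x y = (\<Sum>j\<in>UNIV. x $ j * y $ j)"

text \<open>The linear code generated by the matrix whose columns are the list cs:
  all words m * G (m ranging over F^k), i.e. the row space of G.\<close>
definition gen_code :: "('a::field ^ 'n) list \<Rightarrow> (nat \<Rightarrow> 'a) set" where
  "gen_code cs = {(\<lambda>i. if i < length cs then dotp m (cs ! i) else 0) | m. True}"

definition hweight :: "nat \<Rightarrow> (nat \<Rightarrow> 'a::zero) \<Rightarrow> nat" where
  "hweight n c = card {i. i < n \<and> c i \<noteq> 0}"

definition code_dim :: "(nat \<Rightarrow> 'a::field) set \<Rightarrow> nat" where
  "code_dim C = fvs.dim C"

definition min_dist :: "nat \<Rightarrow> (nat \<Rightarrow> 'a::field) set \<Rightarrow> nat" where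
  "min_dist n C = Min {hweight n c | c. c \<in> C \<and> c \<noteq> 0}"

definition griesmer :: "nat \<Rightarrow> nat \<Rightarrow> nat \<Rightarrow> int" where
  "griesmer q k d = (\<Sum>i<k. \<lceil>real d / real q ^ i\<rceil>)"

definition griesmer_defect :: "('a::{finite,field} ^ 'n) list \<Rightarrow> int" where
  "griesmer_defect cs =
     int (length cs) - griesmer CARD('a) (code_dim (gen_code cs)) (min_dist (length cs) (gen_code cs))"

end

theory Submission
  imports Defs
begin


definition theta :: "nat \<Rightarrow> nat \<Rightarrow> nat" where "theta q u = (\<Sum>i<u. q^i)"

lemma theta_Suc: "theta q (Suc u) = theta q u + q ^ u"
  by (simp add: theta_def)

lemma theta_int: "int q ^ u - 1 = (int q - 1) * int (theta q u)"
proof (induction u)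
  case 0 then show ?case by (simp add: theta_def)
next
  case (Suc u)
  have "(int q - 1) * int (theta q (Suc u)) = (int q - 1) * int (theta q u) + (int q - 1) * int q ^ u"
    by (simp add: theta_Suc algebra_simps)
  also have "\<dots> = int q ^ Suc u - 1" using Suc by (simp add: algebra_simps)
  finally show ?case by simp
qed

lemma digit_bound:
  fixes J :: "nat set" and u :: "nat \<Rightarrow> nat"
  assumes "finite J" "\<And>j. j \<in> J \<Longrightarrow> 1 \<le> u j" "\<And>v. card {j\<in>J. u j = v} < q"
  shows "(\<Sum>j\<in>{j\<in>J. u j \<le> i}. q ^ (u j - 1)) < q ^ i"
proof (induction i)
  case 0
  have e: "{j\<in>J. u j \<le> 0} = {}" using assms(2) by (metis (mono_tags, lifting) empty_Collect_eq le_zero_eq not_one_le_zero)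
  show ?case unfolding e by simp
next
  case (Suc i)
  have split: "{j\<in>J. u j \<le> Suc i} = {j\<in>J. u j \<le> i} \<union> {j\<in>J. u j = Suc i}" by auto
  have "(\<Sum>j\<in>{j\<in>J. u j \<le> Suc i}. q ^ (u j - 1)) =
        (\<Sum>j\<in>{j\<in>J. u j \<le> i}. q ^ (u j - 1)) + (\<Sum>j\<in>{j\<in>J. u j = Suc i}. q ^ (u j - 1))"
    unfolding split by (rule sum.union_disjoint) (use assms(1) in auto)
  also have "(\<Sum>j\<in>{j\<in>J. u j = Suc i}. q ^ (u j - 1)) = card {j\<in>J. u j = Suc i} * q ^ i"
    by simp
  also have "\<dots> \<le> (q - 1) * q ^ i" using assms(3)[of "Suc i"] by (intro mult_right_mono) auto
  finally have "(\<Sum>j\<in>{j\<in>J. u j \<le> Suc i}. q ^ (u j - 1)) < q^i + (q-1) * q^i" using Suc by linarith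
  also have "\<dots> = q ^ Suc i" using assms(3)[of 0] by (cases q) auto
  finally show ?case .
qed

lemma arith_core:
  fixes q k n d u0 :: nat and J :: "nat set" and u :: "nat \<Rightarrow> nat"
  assumes q2: "q \<ge> 2" and fin: "finite J" and uj: "\<And>j. j \<in> J \<Longrightarrow> 1 \<le> u j"
    and N: "int q ^ k = (int q - 1) * int n + int q ^ u0 + (\<Sum>j\<in>J. int q ^ u j - int q ^ u0)"
    and Dd: "int q ^ k - int q ^ (k-1) \<le> (int q - 1) * int d + (\<Sum>j\<in>J. int q ^ u j - int q ^ (u j - 1))"
    and k1: "k \<ge> 1"
  shows "int n - (\<Sum>i<k. \<lceil>real d / real q ^ i\<rceil>) \<le> (int (card J) - 1) * int (theta q u0)
           - (\<Sum>j\<in>J. int (theta q (u j))) + (\<Sum>i<k. int ((\<Sum>j\<in>J. q^(u j - 1)) div q^i))"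
proof -
  define T where "T = (\<Sum>j\<in>J. q^(u j - 1))"
  have qp: "int q - 1 > 0" using q2 by simp
  have th: "\<And>v. int q ^ v = (int q - 1) * int (theta q v) + 1" using theta_int by (metis diff_add_cancel)
  have S: "(\<Sum>j\<in>J. int q ^ u j - int q ^ u0) = (int q - 1) * (\<Sum>j\<in>J. int (theta q (u j)) - int (theta q u0))"
    unfolding sum_distrib_left by (rule sum.cong) (simp_all add: th algebra_simps)
  have N2: "(int q - 1) * int (theta q k) + 1 = (int q - 1) * int n + ((int q - 1) * int (theta q u0) + 1)
       + (int q - 1) * (\<Sum>j\<in>J. int (theta q (u j)) - int (theta q u0))"
    using N unfolding S unfolding th[of k] th[of u0] .
  have "(int q - 1) * int n = (int q - 1) * (int (theta q k) - int (theta q u0) - (\<Sum>j\<in>J. int (theta q (u j)) - int (theta q u0)))"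
    using N2 by (simp add: algebra_simps)
  hence nf: "int n = int (theta q k) - int (theta q u0) - (\<Sum>j\<in>J. int (theta q (u j)) - int (theta q u0))"
    using qp by simp
  have pw: "int q ^ v - int q ^ (v - 1) = (int q - 1) * int q ^ (v - 1)" if "v \<ge> 1" for v
  proof -
    have "int q ^ v = int q * int q ^ (v - 1)" using that by (metis Suc_diff_le diff_Suc_1 power_Suc)
    then show ?thesis by (simp add: algebra_simps)
  qed
  have "(int q - 1) * (int q ^ (k-1) - int T) \<le> (int q - 1) * int d"
  proof -
    have "(\<Sum>j\<in>J. int q ^ u j - int q ^ (u j - 1)) = (int q - 1) * int T"
      unfolding T_def sum_distrib_left of_nat_sum of_nat_power by (rule sum.cong) (use uj pw in auto)
    then show ?thesis using Dd pw[OF k1] by (simp add: algebra_simps)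
  qed
  hence dT: "int q ^ (k-1) - int T \<le> int d" using qp by simp
  have ceil: "int q ^ (k - 1 - i) - int (T div q ^ i) \<le> \<lceil>real d / real q ^ i\<rceil>" if "i < k" for i
  proof -
    have qi: "(0::real) < real q ^ i" using q2 by simp
    have md: "T = q^i * (T div q^i) + T mod q^i" by simp
    have "T mod q^i < q^i" using q2 by simp
    hence mlt: "int (T mod q^i) < int q ^ i" by (metis of_nat_less_iff of_nat_power)
    have eq: "int q ^ (k-1) = int q ^ (k - 1 - i) * int q ^ i" proof -
      have "k - 1 = (k - 1 - i) + i" using that by simp
      then show ?thesis by (metis power_add)
    qed
    have "(int q ^ (k - 1 - i) - int (T div q ^ i) - 1) * int q ^ i < int d"
    proof -
      have "(int q ^ (k - 1 - i) - int (T div q ^ i) - 1) * int q ^ i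
          = int q ^ (k-1) - (int q ^ i * int (T div q^i) + int (T mod q^i)) + int (T mod q^i) - int q ^ i"
        unfolding eq by algebra
      also have "int q ^ i * int (T div q^i) + int (T mod q^i) = int T"
        by (metis md of_nat_add of_nat_mult of_nat_power)
      finally show ?thesis using dT mlt by linarith
    qed
    hence "real_of_int (int q ^ (k - 1 - i) - int (T div q ^ i) - 1) * real q ^ i < real d"
      by (metis of_int_less_iff of_int_mult of_int_of_nat_eq of_int_power)
    hence "real_of_int (int q ^ (k - 1 - i) - int (T div q ^ i) - 1) < real d / real q ^ i"
      using qi by (simp add: pos_less_divide_eq)
    hence "int q ^ (k - 1 - i) - int (T div q ^ i) - 1 < \<lceil>real d / real q ^ i\<rceil>"
      by (simp add: less_ceiling_iff)
    then show ?thesis by linarith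
  qed
  have "(\<Sum>i<k. int q ^ (k - 1 - i) - int (T div q ^ i)) \<le> (\<Sum>i<k. \<lceil>real d / real q ^ i\<rceil>)"
    by (rule sum_mono) (use ceil in auto)
  moreover have "(\<Sum>i<k. int q ^ (k - 1 - i)) = int (theta q k)"
  proof -
    have "(\<Sum>i<k. int q ^ (k - 1 - i)) = (\<Sum>i<k. int q ^ (k - Suc i))" by simp
    also have "\<dots> = (\<Sum>i<k. int q ^ i)" by (rule sum.nat_diff_reindex)
    finally show ?thesis by (simp add: theta_def)
  qed
  ultimately have "int (theta q k) - (\<Sum>i<k. int (T div q ^ i)) \<le> (\<Sum>i<k. \<lceil>real d / real q ^ i\<rceil>)"
    by (simp add: sum_subtractf)
  then show ?thesis using nf unfolding T_def[symmetric]
    by (simp add: sum_subtractf algebra_simps)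
qed



lemma theta_real: "q \<ge> 2 \<Longrightarrow> (real q ^ u - 1) / (real q - 1) = real (theta q u)"
proof -
  assume q: "q \<ge> 2"
  have "real_of_int (int q ^ u - 1) = real_of_int ((int q - 1) * int (theta q u))" using theta_int by metis
  hence "real q ^ u - 1 = (real q - 1) * real (theta q u)" by simp
  moreover have "real q - 1 \<noteq> 0" using q by simp
  ultimately show ?thesis by simp
qed

lemma theta_rev: "theta q u = (\<Sum>i<u. q ^ (u - 1 - i))"
proof -
  have "(\<Sum>i<u. q ^ (u - 1 - i)) = (\<Sum>i<u. q ^ (u - Suc i))" by simp
  also have "\<dots> = (\<Sum>i<u. q ^ i)" by (rule sum.nat_diff_reindex)
  finally show ?thesis by (simp add: theta_def)
qed

lemma tdiv_part1:
  fixes J :: "nat set" and u :: "nat \<Rightarrow> nat"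
  assumes fin: "finite J" and uj: "\<And>j. j \<in> J \<Longrightarrow> 1 \<le> u j \<and> u j \<le> k"
    and cnt: "\<And>v. card {j\<in>J. u j = v} < q"
  shows "(\<Sum>i<k. (\<Sum>j\<in>J. q^(u j - 1)) div q^i) \<le> (\<Sum>j\<in>J. theta q (u j))"
proof -
  define A where "A i = (\<Sum>j\<in>J. if i < u j then q ^ (u j - 1 - i) else 0)" for i
  have qpos: "q > 0" using cnt[of 0] by simp
  have step: "(\<Sum>j\<in>J. q^(u j - 1)) div q^i = A i" for i
  proof -
    have B: "(\<Sum>j\<in>{j\<in>J. u j \<le> i}. q ^ (u j - 1)) < q ^ i"
      by (rule digit_bound) (use fin uj cnt in auto)
    have "(\<Sum>j\<in>J. q^(u j - 1)) = (\<Sum>j\<in>J. (if i < u j then q^i * q ^ (u j - 1 - i) else 0) + (if u j \<le> i then q^(u j - 1) else 0))"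
    proof (rule sum.cong)
      fix j assume "j \<in> J"
      show "q^(u j - 1) = (if i < u j then q^i * q ^ (u j - 1 - i) else 0) + (if u j \<le> i then q^(u j - 1) else 0)"
      proof (cases "i < u j")
        case True
        then have "u j - 1 = i + (u j - 1 - i)" by simp
        then have "q^(u j - 1) = q^i * q ^ (u j - 1 - i)" by (metis power_add)
        then show ?thesis using True by simp
      qed auto
    qed simp
    also have "\<dots> = q^i * A i + (\<Sum>j\<in>{j\<in>J. u j \<le> i}. q ^ (u j - 1))"
    proof -
      have e1: "(\<Sum>j\<in>J. if i < u j then q^i * q ^ (u j - 1 - i) else 0) = q^i * A i"
        unfolding A_def sum_distrib_left by (rule sum.cong) auto
      have e2: "(\<Sum>j\<in>J. if u j \<le> i then q^(u j - 1) else 0) = (\<Sum>j\<in>{j\<in>J. u j \<le> i}. q ^ (u j - 1))"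
        using fin by (rule sum.inter_filter[symmetric])
      show ?thesis unfolding sum.distrib e1 e2 ..
    qed
    also have "\<dots> = (\<Sum>j\<in>{j\<in>J. u j \<le> i}. q ^ (u j - 1)) + A i * q^i" by simp
    finally have eqT: "(\<Sum>j\<in>J. q^(u j - 1)) = (\<Sum>j\<in>{j\<in>J. u j \<le> i}. q ^ (u j - 1)) + A i * q^i" .
    have d0: "(\<Sum>j\<in>{j\<in>J. u j \<le> i}. q ^ (u j - 1)) div q^i = 0" using B by (rule div_less)
    have "((\<Sum>j\<in>{j\<in>J. u j \<le> i}. q ^ (u j - 1)) + A i * q^i) div q^i = A i + (\<Sum>j\<in>{j\<in>J. u j \<le> i}. q ^ (u j - 1)) div q^i"
      by (rule div_mult_self1) (use qpos in simp)
    then show ?thesis unfolding eqT d0 by simp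
  qed
  have "(\<Sum>i<k. A i) = (\<Sum>j\<in>J. \<Sum>i<k. if i < u j then q ^ (u j - 1 - i) else 0)"
    unfolding A_def by (rule sum.swap)
  also have "\<dots> = (\<Sum>j\<in>J. theta q (u j))"
  proof (rule sum.cong)
    fix j assume j: "j \<in> J"
    have "(\<Sum>i<k. if i < u j then q ^ (u j - 1 - i) else 0) = (\<Sum>i\<in>{..<k} \<inter> {i. i < u j}. q ^ (u j - 1 - i))"
      by (subst sum.inter_restrict) auto
    also have "{..<k} \<inter> {i. i < u j} = {..<u j}" using uj[OF j] by auto
    finally show "(\<Sum>i<k. if i < u j then q ^ (u j - 1 - i) else 0) = theta q (u j)"
      by (simp add: theta_rev)
  qed simp
  finally show ?thesis unfolding step by simp
qed

lemma tdiv_part2: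
  fixes h w k q :: nat
  assumes q: "q \<ge> 2" and w: "1 \<le> w" "w \<le> k"
  shows "(\<Sum>i<k. (h * q^(w - 1)) div q^i) = h * theta q w + (\<Sum>m\<in>{1..k-w}. h div q^m)"
proof -
  have qpos: "q > 0" using q by simp
  have split: "{..<k} = {..<w} \<union> {w..<k}" using w by auto
  have "(\<Sum>i<k. (h * q^(w - 1)) div q^i) = (\<Sum>i<w. (h * q^(w - 1)) div q^i) + (\<Sum>i\<in>{w..<k}. (h * q^(w - 1)) div q^i)"
    unfolding split by (rule sum.union_disjoint) auto
  also have "(\<Sum>i<w. (h * q^(w - 1)) div q^i) = (\<Sum>i<w. h * q ^ (w - 1 - i))"
  proof (rule sum.cong)
    fix i assume "i \<in> {..<w}"
    then have "w - 1 = i + (w - 1 - i)" by simp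
    then have e1: "h * q^(w - 1) = q^i * (h * q ^ (w - 1 - i))" by (metis mult.left_commute power_add)
    have e2: "q^i * (h * q ^ (w - 1 - i)) div q^i = h * q ^ (w - 1 - i)"
      using qpos by (rule nonzero_mult_div_cancel_left[OF power_not_zero, OF gr_implies_not0])
    show "(h * q^(w - 1)) div q^i = h * q ^ (w - 1 - i)" unfolding e1 by (rule e2)
  qed simp
  also have "\<dots> = h * theta q w" unfolding theta_rev sum_distrib_left ..
  also have "(\<Sum>i\<in>{w..<k}. (h * q^(w - 1)) div q^i) = (\<Sum>m\<in>{1..k-w}. h div q^m)"
  proof (rule sum.reindex_bij_witness[of _ "\<lambda>m. m + w - 1" "\<lambda>i. i + 1 - w"])
    fix m assume m: "m \<in> {1..k-w}"
    show "m + w - 1 + 1 - w = m" using m w by auto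
    show "m + w - 1 \<in> {w..<k}" using m w by auto
  next
    fix i assume i: "i \<in> {w..<k}"
    show "i + 1 - w + w - 1 = i" "i + 1 - w \<in> {1..k-w}" using i w by auto
    have "i = (w - 1) + (i + 1 - w)" using i w by auto
    then have "q ^ i = q^(w-1) * q^(i + 1 - w)" by (metis power_add)
    moreover have "(h * q^(w - 1)) div q^(w-1) = h" using qpos by simp
    ultimately show "h div q^(i + 1 - w) = (h * q^(w - 1)) div q^i"
      by (simp only: div_mult2_eq)
  qed
  finally show ?thesis .
qed




lemma dotp_add_right: "dotp m (x + y) = dotp m x + dotp m y"
  unfolding dotp_def by (simp add: sum.distrib distrib_left)
lemma dotp_scale_right: "dotp m (c *s x) = c * dotp m x"
  unfolding dotp_def by (simp add: sum_distrib_left mult.left_commute)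
lemma dotp_diff_right: "dotp m (x - y) = dotp m x - dotp m y"
  unfolding dotp_def by (simp add: sum_subtractf right_diff_distrib)
lemma dotp_diff_left: "dotp (x - y) c = dotp x c - dotp y c"
  unfolding dotp_def by (simp add: sum_subtractf left_diff_distrib)
lemma dotp_zero_right[simp]: "dotp m 0 = 0"
  unfolding dotp_def by simp
lemma dotp_zero_left[simp]: "dotp 0 x = 0"
  unfolding dotp_def by simp
lemma dotp_axis: "dotp m (axis j 1) = m $ j"
  unfolding dotp_def axis_def by (simp add: if_distrib cong: if_cong)

lemma card_field_ge2: "CARD('a::{finite,field}) \<ge> 2"
proof -
  have "{0::'a, 1} \<subseteq> UNIV" by simp
  then have "card {0::'a, 1} \<le> CARD('a)" by (intro card_mono) simp_all
  then show ?thesis by simp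
qed

lemma card_subspace:
  fixes S :: "('a::{finite,field}^'n) set"
  assumes "vec.subspace S"
  shows "card S = CARD('a) ^ vec.dim S"
proof -
  obtain B where B: "B \<subseteq> S" "vec.independent B" "S \<subseteq> vec.span B" "card B = vec.dim S"
    using vec.basis_exists by blast
  have fB: "finite B" using B(2) vec.independent_explicit by blast
  have spB: "vec.span B = S" using vec.span_subspace[OF B(1) B(3) assms] .
  define g where "g f = (\<Sum>v\<in>B. f v *s v)" for f :: "'a^'n \<Rightarrow> 'a"
  have "bij_betw g (PiE B (\<lambda>_. UNIV)) S"
  proof (rule bij_betw_imageI)
    show "inj_on g (PiE B (\<lambda>_. UNIV))"
    proof (rule inj_onI)
      fix f1 f2 assume f1: "f1 \<in> PiE B (\<lambda>_. UNIV)" and f2: "f2 \<in> PiE B (\<lambda>_. UNIV)" and e: "g f1 = g f2"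
      have s0: "(\<Sum>v\<in>B. (f1 v - f2 v) *s v) = 0"
        using e unfolding g_def by (simp add: vector_sub_rdistrib sum_subtractf)
      have ind: "\<forall>c. (\<Sum>v\<in>B. c v *s v) = 0 \<longrightarrow> (\<forall>v\<in>B. c v = 0)"
        using B(2) unfolding vec.independent_explicit by blast
      have "\<forall>v\<in>B. f1 v - f2 v = 0"
        using spec[OF ind, of "\<lambda>v. f1 v - f2 v"] s0 by simp
      then show "f1 = f2" using f1 f2 by (auto intro: PiE_ext)
    qed
    show "g ` PiE B (\<lambda>_. UNIV) = S"
    proof
      show "g ` PiE B (\<lambda>_. UNIV) \<subseteq> S"
        unfolding g_def using B(1) by (auto intro!: vec.subspace_sum[OF assms] vec.subspace_scale[OF assms])
      show "S \<subseteq> g ` PiE B (\<lambda>_. UNIV)"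
      proof
        fix x assume "x \<in> S"
        then obtain c where c: "x = (\<Sum>v\<in>B. c v *s v)" using spB vec.span_finite[OF fB] by auto
        have "restrict c B \<in> PiE B (\<lambda>_. UNIV)" by simp
        moreover have "g (restrict c B) = x" unfolding g_def c by (rule sum.cong) auto
        ultimately show "x \<in> g ` PiE B (\<lambda>_. UNIV)" by (metis image_eqI)
      qed
    qed
  qed
  then have "card S = card (PiE B (\<lambda>_. UNIV :: 'a set))" by (simp add: bij_betw_same_card)
  also have "\<dots> = CARD('a) ^ card B" using fB by (simp add: card_PiE)
  finally show ?thesis using B(4) by simp
qed

lemma hyper_count:
  fixes S :: "('a::{finite,field}^'n) set" and m :: "'a^'n"
  assumes sub: "vec.subspace S" and w: "w \<in> S" "dotp m w \<noteq> 0"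
  shows "card {x\<in>S. dotp m x \<noteq> 0} * CARD('a) = card S * (CARD('a) - 1)"
proof -
  define w' where "w' = inverse (dotp m w) *s w"
  have w'1: "dotp m w' = 1" using w(2) unfolding w'_def by (simp add: dotp_scale_right)
  have w'S: "w' \<in> S" unfolding w'_def using vec.subspace_scale[OF sub w(1)] .
  define S0 where "S0 = {x\<in>S. dotp m x = 0}"
  define f where "f = (\<lambda>(x::'a^'n, t::'a). x + t *s w')"
  have bij: "bij_betw f (S0 \<times> T) {y\<in>S. dotp m y \<in> T}" for T
  proof (rule bij_betw_byWitness[where f'="\<lambda>y. (y - dotp m y *s w', dotp m y)"])
    show "\<forall>a\<in>S0 \<times> T. (f a - dotp m (f a) *s w', dotp m (f a)) = a"
      unfolding f_def S0_def by (auto simp: dotp_add_right dotp_scale_right w'1)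
    show "\<forall>a'\<in>{y \<in> S. dotp m y \<in> T}. f (a' - dotp m a' *s w', dotp m a') = a'"
      unfolding f_def by auto
    show "f ` (S0 \<times> T) \<subseteq> {y \<in> S. dotp m y \<in> T}"
      unfolding f_def S0_def using w'S
      by (auto simp: dotp_add_right dotp_scale_right w'1 intro!: vec.subspace_add[OF sub] vec.subspace_scale[OF sub])
    show "(\<lambda>y. (y - dotp m y *s w', dotp m y)) ` {y \<in> S. dotp m y \<in> T} \<subseteq> S0 \<times> T"
      unfolding S0_def using w'S
      by (auto simp: dotp_diff_right dotp_scale_right w'1 intro!: vec.subspace_diff[OF sub] vec.subspace_scale[OF sub])
  qed
  have fS: "finite S0" by simp
  have c1: "card {y\<in>S. dotp m y \<in> UNIV} = card S0 * CARD('a)"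
    using bij_betw_same_card[OF bij[of UNIV]] by (simp add: card_cartesian_product)
  have c2: "card {y\<in>S. dotp m y \<in> UNIV - {0}} = card S0 * (CARD('a) - 1)"
    using bij_betw_same_card[OF bij[of "UNIV - {0}"]] by (simp add: card_cartesian_product card_Diff_subset)
  show ?thesis using c1 c2 by simp
qed

theorem lemma3p2:
  fixes U :: "nat \<Rightarrow> ('a::{finite,field} ^ 'n::finite) set"
    and u :: "nat \<Rightarrow> nat" and h :: nat
    and cs :: "('a ^ 'n) list"
  assumes k3: "CARD('n) \<ge> 3"
    and h2: "h \<ge> 2"
    and u0: "1 \<le> u 0" and u01: "u 0 < u 1"
    and umono: "\<And>i. 1 \<le> i \<Longrightarrow> i < h \<Longrightarrow> u i \<le> u (Suc i)"
    and subsp: "\<And>i. i \<le> h \<Longrightarrow> vec.subspace (U i)"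
    and dims: "\<And>i. i \<le> h \<Longrightarrow> vec.dim (U i) = u i"
    and inter: "\<And>i j. i \<in> {1..h} \<Longrightarrow> j \<in> {1..h} \<Longrightarrow> i \<noteq> j \<Longrightarrow> U i \<inter> U j = U 0"
    and ineq: "int CARD('a) ^ CARD('n) - int CARD('a) ^ (CARD('n) - 1)
               > int CARD('a) ^ u 0 - 1 + (\<Sum>i\<in>{1..h}. int CARD('a) ^ u i - int CARD('a) ^ u 0)"
    and cs_dist: "distinct cs"
    and cs_sub: "set cs \<subseteq> {v. v \<noteq> 0 \<and> (\<forall>i\<in>{1..h}. v \<notin> U i)}"
    and cs_rep: "\<And>v. v \<in> {v. v \<noteq> 0 \<and> (\<forall>i\<in>{1..h}. v \<notin> U i)} \<Longrightarrow>
                   \<exists>!c. c \<in> set cs \<and> (\<exists>l. l \<noteq> 0 \<and> c = l *s v)"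
  shows "((\<forall>i\<in>{1..h}. card {j\<in>{1..h}. u j = u i} < CARD('a)) \<longrightarrow>
            real_of_int (griesmer_defect cs)
              \<le> real (h - 1) * ((real CARD('a) ^ u 0 - 1) / (real CARD('a) - 1)))
       \<and> (\<forall>w. (\<forall>i\<in>{1..h}. u i = w) \<longrightarrow>
            real_of_int (griesmer_defect cs)
              \<le> real (h - 1) * ((real CARD('a) ^ u 0 - 1) / (real CARD('a) - 1))
                 + (\<Sum>i\<in>{1..CARD('n) - w}. real_of_int \<lfloor>real h / real CARD('a) ^ i\<rfloor>))"
proof -
  define q where "q = CARD('a)"
  define k where "k = CARD('n)"
  define n where "n = length cs"
  have q2: "q \<ge> 2" using card_field_ge2 q_def by simp
  have k1: "k \<ge> 1" using k3 k_def by simp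
  define E where "E = (\<Union>i\<in>{1..h}. U i)"
  define Sset where "Sset = {v::'a^'n. v \<noteq> 0 \<and> (\<forall>i\<in>{1..h}. v \<notin> U i)}"
  have U0sub: "U 0 \<subseteq> U i" if i: "i \<in> {1..h}" for i
  proof (cases "i = 1")
    case True
    then have "U i \<inter> U 2 = U 0" using inter[of i 2] h2 i by auto
    then show ?thesis by auto
  next
    case False
    then have "U i \<inter> U 1 = U 0" using inter[of i 1] h2 i by auto
    then show ?thesis by auto
  qed
  have cardU: "card (U i) = q ^ u i" if "i \<le> h" for i
    using card_subspace[OF subsp[OF that]] dims[OF that] q_def by simp
  have qu0: "q ^ u 0 \<le> q ^ u i" if i: "i \<in> {1..h}" for i
    using card_mono[OF finite U0sub[OF i]] cardU[of 0] cardU[of i] i by simp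
  have ui1: "1 \<le> u i" if i: "i \<in> {1..h}" for i
  proof (rule ccontr)
    assume "\<not> 1 \<le> u i"
    then have "q ^ u i = 1" by simp
    moreover have "q \<le> q ^ u 0" using power_increasing[of 1 "u 0" q] u0 q2 by simp
    ultimately show False using qu0[OF i] q2 by simp
  qed
  have uik: "u i \<le> k" if i: "i \<in> {1..h}" for i
  proof -
    have "card (U i) \<le> card (UNIV :: ('a^'n) set)" by (intro card_mono) simp_all
    then have "q ^ u i \<le> q ^ k" using cardU[of i] i q_def k_def by simp
    then show ?thesis using q2 by (simp add: power_le_imp_le_exp)
  qed
  have zeroU: "0 \<in> U i" if "i \<le> h" for i using vec.subspace_0[OF subsp[OF that]] .
  have zeroE: "0 \<in> E" unfolding E_def using zeroU[of 1] h2 by auto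
  have cardE: "card E = q ^ u 0 + (\<Sum>i\<in>{1..h}. q ^ u i - q ^ u 0)"
  proof -
    have Eeq: "E = U 0 \<union> (\<Union>i\<in>{1..h}. U i - U 0)"
    proof
      show "E \<subseteq> U 0 \<union> (\<Union>i\<in>{1..h}. U i - U 0)" unfolding E_def by blast
      have "U 0 \<subseteq> U 1" using U0sub[of 1] h2 by simp
      moreover have "U 1 \<subseteq> E" unfolding E_def by (rule UN_upper) (use h2 in simp)
      ultimately show "U 0 \<union> (\<Union>i\<in>{1..h}. U i - U 0) \<subseteq> E" unfolding E_def by blast
    qed
    have "card (\<Union>i\<in>{1..h}. U i - U 0) = (\<Sum>i\<in>{1..h}. card (U i - U 0))"
    proof (rule card_UN_disjoint)
      show "\<forall>i\<in>{1..h}. \<forall>j\<in>{1..h}. i \<noteq> j \<longrightarrow> (U i - U 0) \<inter> (U j - U 0) = {}"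
      proof (intro ballI impI)
        fix i j assume "i \<in> {1..h}" "j \<in> {1..h}" "i \<noteq> j"
        then have "U i \<inter> U j = U 0" by (rule inter)
        then show "(U i - U 0) \<inter> (U j - U 0) = {}" by blast
      qed
    qed simp_all
    also have "\<dots> = (\<Sum>i\<in>{1..h}. q ^ u i - q ^ u 0)"
      by (rule sum.cong) (simp_all add: card_Diff_subset U0sub cardU)
    finally have "card (\<Union>i\<in>{1..h}. U i - U 0) = (\<Sum>i\<in>{1..h}. q ^ u i - q ^ u 0)" .
    moreover have "card E = card (U 0) + card (\<Union>i\<in>{1..h}. U i - U 0)"
      unfolding Eeq by (rule card_Un_disjoint) auto
    ultimately show ?thesis using cardU[of 0] by simp
  qed
  have SsetE: "Sset = UNIV - E" unfolding Sset_def using zeroE unfolding E_def by blast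
  have cardS: "card Sset = q ^ k - card E"
    unfolding SsetE by (simp add: card_Diff_subset q_def k_def)
  have csS: "set cs \<subseteq> Sset" using cs_sub unfolding Sset_def .
  have Sscale: "l *s v \<in> Sset" if v: "v \<in> Sset" and l: "l \<noteq> 0" for v l
  proof -
    have "l *s v \<notin> U i" if i: "i \<in> {1..h}" for i
    proof
      assume lv: "l *s v \<in> U i"
      have ih: "i \<le> h" using i by simp
      have "inverse l *s (l *s v) \<in> U i" by (rule vec.subspace_scale[OF subsp[OF ih] lv])
      then have "v \<in> U i" using l by (simp add: vec.scale_scale)
      then show False using v i unfolding Sset_def by auto
    qed
    moreover have "l *s v \<noteq> 0" using v l unfolding Sset_def by simp
    ultimately show ?thesis unfolding Sset_def by auto
  qed
  define F where "F = (\<lambda>(c::'a^'n, l::'a). l *s c)"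
  have injF: "inj_on F (set cs \<times> (UNIV - {0}))"
  proof (rule inj_onI)
    fix x y assume x: "x \<in> set cs \<times> (UNIV - {0})" and y: "y \<in> set cs \<times> (UNIV - {0})" and e: "F x = F y"
    obtain c l where xcl: "x = (c, l)" by fastforce
    obtain c' l' where ycl: "y = (c', l')" by fastforce
    have c: "c \<in> set cs" "l \<noteq> 0" and c': "c' \<in> set cs" "l' \<noteq> 0" using x y xcl ycl by auto
    have e2: "l *s c = l' *s c'" using e xcl ycl unfolding F_def by simp
    have c'S: "c' \<in> Sset" using c' csS by auto
    have c'S2: "c' \<in> {v. v \<noteq> 0 \<and> (\<forall>i\<in>{1..h}. v \<notin> U i)}" using c'S unfolding Sset_def .
    have uq: "\<exists>!c0. c0 \<in> set cs \<and> (\<exists>l0. l0 \<noteq> 0 \<and> c0 = l0 *s c')"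
      by (rule cs_rep[OF c'S2])
    then obtain c0 where c0: "\<And>y. y \<in> set cs \<and> (\<exists>l0. l0 \<noteq> 0 \<and> y = l0 *s c') \<Longrightarrow> y = c0"
      by (metis (no_types, lifting))
    have "c = (inverse l * l') *s c'"
    proof -
      have "c = inverse l *s (l *s c)" using c by (simp add: vec.scale_scale)
      also have "\<dots> = (inverse l * l') *s c'" unfolding e2 by (simp add: vec.scale_scale)
      finally show ?thesis .
    qed
    moreover have "inverse l * l' \<noteq> 0" using c c' by simp
    ultimately have "c \<in> set cs \<and> (\<exists>l0. l0 \<noteq> 0 \<and> c = l0 *s c')" using c by blast
    moreover have "c' \<in> set cs \<and> (\<exists>l0. l0 \<noteq> 0 \<and> c' = l0 *s c')" using c' by (intro conjI exI[of _ 1]) simp_all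
    ultimately have cc: "c = c'" using c0 by metis
    have "c' \<noteq> 0" using c'S unfolding Sset_def by simp
    then have "l = l'" using e2 unfolding cc by (rule vec.scale_right_imp_eq)
    then show "x = y" using xcl ycl cc by simp
  qed
  have imgF: "F ` ({c\<in>set cs. P c} \<times> (UNIV - {0})) = {v\<in>Sset. P v}"
    if P: "\<And>l v. l \<noteq> 0 \<Longrightarrow> P (l *s v) = P v" for P
  proof
    show "F ` ({c\<in>set cs. P c} \<times> (UNIV - {0})) \<subseteq> {v\<in>Sset. P v}"
      unfolding F_def using csS Sscale P by auto
    show "{v\<in>Sset. P v} \<subseteq> F ` ({c\<in>set cs. P c} \<times> (UNIV - {0}))"
    proof
      fix v assume v: "v \<in> {v\<in>Sset. P v}"
      then have vS2: "v \<in> {v. v \<noteq> 0 \<and> (\<forall>i\<in>{1..h}. v \<notin> U i)}" unfolding Sset_def by simp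
      obtain c where "c \<in> set cs \<and> (\<exists>l. l \<noteq> 0 \<and> c = l *s v)"
        using ex1_implies_ex[OF cs_rep[OF vS2]] by blast
      then obtain l where cl: "c \<in> set cs" "l \<noteq> 0" "c = l *s v" by blast
      have "v = inverse l *s c" using cl by (simp add: vec.scale_scale)
      moreover have "P c" using cl v P by simp
      ultimately have "v = F (c, inverse l)" "(c, inverse l) \<in> {c\<in>set cs. P c} \<times> (UNIV - {0})"
        using cl unfolding F_def by auto
      then show "v \<in> F ` ({c\<in>set cs. P c} \<times> (UNIV - {0}))" by blast
    qed
  qed
  have cardF: "card {v\<in>Sset. P v} = card {c\<in>set cs. P c} * (q - 1)"
    if P: "\<And>l v. l \<noteq> 0 \<Longrightarrow> P (l *s v) = P v" for P
  proof -
    have "card (F ` ({c\<in>set cs. P c} \<times> (UNIV - {0::'a}))) = card ({c\<in>set cs. P c} \<times> (UNIV - {0::'a}))"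
      by (rule card_image) (rule inj_on_subset[OF injF], auto)
    then have "card {v\<in>Sset. P v} = card ({c\<in>set cs. P c} \<times> (UNIV - {0::'a}))"
      using imgF[OF P] by simp
    also have "\<dots> = card {c\<in>set cs. P c} * (q - 1)"
      by (simp add: card_cartesian_product card_Diff_subset q_def)
    finally show ?thesis .
  qed
  have cardSn: "card Sset = n * (q - 1)"
    using cardF[of "\<lambda>_. True"] cs_dist by (simp add: n_def distinct_card)
  define L where "L m = (\<lambda>i. if i < n then dotp m (cs ! i) else (0::'a))" for m :: "'a^'n"
  have hwL: "hweight n (L m) = card {c\<in>set cs. dotp m c \<noteq> 0}" for m
  proof -
    have e1: "{i. i < n \<and> L m i \<noteq> 0} = {i. i < n \<and> dotp m (cs ! i) \<noteq> 0}" unfolding L_def by auto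
    have e2: "nth cs ` {i. i < n \<and> dotp m (cs ! i) \<noteq> 0} = {c\<in>set cs. dotp m c \<noteq> 0}"
      unfolding n_def by (auto simp: in_set_conv_nth)
    have e3: "inj_on (nth cs) {i. i < n \<and> dotp m (cs ! i) \<noteq> 0}"
      using cs_dist unfolding n_def by (intro inj_on_nth) auto
    have "card {i. i < n \<and> dotp m (cs ! i) \<noteq> 0} = card (nth cs ` {i. i < n \<and> dotp m (cs ! i) \<noteq> 0})"
      using e3 by (rule card_image[symmetric])
    then show ?thesis unfolding hweight_def e1 e2 .
  qed
  have wL: "card {v\<in>Sset. dotp m v \<noteq> 0} = hweight n (L m) * (q - 1)" for m
    unfolding hwL by (rule cardF) (simp add: dotp_scale_right)
  have cardE_int: "int (card E) = int q ^ u 0 + (\<Sum>i\<in>{1..h}. int q ^ u i - int q ^ u 0)"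
  proof -
    have "int (card E) = int (q ^ u 0) + (\<Sum>i\<in>{1..h}. int (q ^ u i - q ^ u 0))"
      unfolding cardE by simp
    also have "(\<Sum>i\<in>{1..h}. int (q ^ u i - q ^ u 0)) = (\<Sum>i\<in>{1..h}. int q ^ u i - int q ^ u 0)"
      by (rule sum.cong) (simp_all add: qu0 of_nat_diff)
    finally show ?thesis by simp
  qed
  have ineq': "int q ^ k - int q ^ (k - 1) > int q ^ u 0 - 1 + (\<Sum>i\<in>{1..h}. int q ^ u i - int q ^ u 0)"
    using ineq unfolding q_def k_def .
  have qk: "int q ^ k = int q * int q ^ (k - 1)" using k1 by (metis Suc_diff_le diff_Suc_1 power_Suc)
  have wprops: "0 < hweight n (L m) \<and>
      int q ^ k - int q ^ (k - 1) \<le> (int q - 1) * int (hweight n (L m)) + (\<Sum>i\<in>{1..h}. int q ^ u i - int q ^ (u i - 1))"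
    if m: "m \<noteq> 0" for m
  proof -
    obtain j where j: "m $ j \<noteq> 0" using m by (metis vec_eq_iff zero_index)
    define P where "P v = (dotp m v \<noteq> 0)" for v
    have hc: "card {x\<in>UNIV. dotp m x \<noteq> 0} * q = card (UNIV :: ('a^'n) set) * (q - 1)"
      unfolding q_def by (rule hyper_count[of UNIV "axis j 1"]) (simp_all add: vec.subspace_UNIV dotp_axis j)
    have NmC: "int (card {v. P v}) = (int q - 1) * int q ^ (k - 1)"
    proof -
      have "int (card {v. P v}) * int q = int q ^ k * (int q - 1)"
        using arg_cong[OF hc, of int] q2 unfolding P_def by (simp add: q_def k_def of_nat_diff)
      also have "\<dots> = ((int q - 1) * int q ^ (k - 1)) * int q" unfolding qk by (simp add: algebra_simps)
      finally show ?thesis using q2 by simp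
    qed
    have Esplit: "{v. P v} = {v\<in>Sset. P v} \<union> {v\<in>E. P v}" using SsetE by auto
    have cardNm: "card {v. P v} = card {v\<in>Sset. P v} + card {v\<in>E. P v}"
      unfolding Esplit by (rule card_Un_disjoint) (use SsetE in auto)
    have Eb: "card {v\<in>E. P v} \<le> (\<Sum>i\<in>{1..h}. q ^ u i - q ^ (u i - 1))"
    proof -
      have "{v\<in>E. P v} = (\<Union>i\<in>{1..h}. {v\<in>U i. P v})" unfolding E_def by auto
      then have "card {v\<in>E. P v} \<le> (\<Sum>i\<in>{1..h}. card {v\<in>U i. P v})" by (simp add: card_UN_le)
      also have "\<dots> \<le> (\<Sum>i\<in>{1..h}. q ^ u i - q ^ (u i - 1))"
      proof (rule sum_mono)
        fix i assume i: "i \<in> {1..h}"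
        show "card {v\<in>U i. P v} \<le> q ^ u i - q ^ (u i - 1)"
        proof (cases "\<exists>w\<in>U i. P w")
          case True
          then obtain w where w: "w \<in> U i" "dotp m w \<noteq> 0" unfolding P_def by blast
          have ih: "i \<le> h" using i by simp
          have "card {v\<in>U i. P v} * q = q ^ u i * (q - 1)"
            using hyper_count[OF subsp[OF ih] w] cardU[OF ih] unfolding P_def q_def by simp
          also have "q ^ u i = q ^ (u i - 1) * q" using ui1[OF i] by (metis Suc_diff_le diff_Suc_1 power_Suc2)
          finally have "card {v\<in>U i. P v} * q = (q ^ (u i - 1) * (q - 1)) * q" by (simp add: algebra_simps)
          then have "card {v\<in>U i. P v} = q ^ (u i - 1) * (q - 1)" using q2 by simp
          also have "\<dots> = q ^ (u i - 1) * q - q ^ (u i - 1)" by (simp add: diff_mult_distrib2)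
          also have "q ^ (u i - 1) * q = q ^ u i" using ui1[OF i] by (metis Suc_diff_le diff_Suc_1 power_Suc2)
          finally show ?thesis by simp
        next
          case False
          then have e: "{v\<in>U i. P v} = {}" by auto
          show ?thesis unfolding e by simp
        qed
      qed
      finally show ?thesis .
    qed
    have Elt: "card {v\<in>E. P v} < card E"
    proof (rule psubset_card_mono)
      have "0 \<notin> {v\<in>E. P v}" unfolding P_def by simp
      then show "{v\<in>E. P v} \<subset> E" using zeroE by blast
    qed simp
    have Wq: "card {v\<in>Sset. P v} = hweight n (L m) * (q - 1)" unfolding P_def by (rule wL)
    have intW: "int (card {v\<in>Sset. P v}) = (int q - 1) * int (hweight n (L m))"
      unfolding Wq using q2 by (simp add: of_nat_diff)
    have Eb_int: "int (card {v\<in>E. P v}) \<le> (\<Sum>i\<in>{1..h}. int q ^ u i - int q ^ (u i - 1))"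
    proof -
      have "int (card {v\<in>E. P v}) \<le> int (\<Sum>i\<in>{1..h}. q ^ u i - q ^ (u i - 1))" using Eb by (simp only: of_nat_le_iff)
      also have "\<dots> = (\<Sum>i\<in>{1..h}. int q ^ u i - int q ^ (u i - 1))"
        unfolding of_nat_sum
      proof (rule sum.cong)
        fix i :: nat
        have "q ^ (u i - 1) \<le> q ^ u i" using q2 by (intro power_increasing) auto
        then show "int (q ^ u i - q ^ (u i - 1)) = int q ^ u i - int q ^ (u i - 1)" by (simp add: of_nat_diff)
      qed simp
      finally show ?thesis .
    qed
    have pw: "int q ^ k - int q ^ (k - 1) = (int q - 1) * int q ^ (k - 1)" unfolding qk by (simp add: algebra_simps)
    have "int (card {v\<in>Sset. P v}) > 0"
      using cardNm NmC Elt cardE_int ineq' pw by linarith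
    then have "card {v\<in>Sset. P v} > 0" by simp
    then have pos: "0 < hweight n (L m)" unfolding Wq by (simp add: zero_less_mult_iff)
    have "int q ^ k - int q ^ (k - 1) \<le> (int q - 1) * int (hweight n (L m)) + (\<Sum>i\<in>{1..h}. int q ^ u i - int q ^ (u i - 1))"
      using cardNm NmC Eb_int intW pw by linarith
    then show ?thesis using pos by simp
  qed
  have L0: "L 0 = 0" unfolding L_def by (simp add: fun_eq_iff)
  have injL: "inj L"
  proof (rule injI)
    fix x y assume e: "L x = L y"
    show "x = y"
    proof (rule ccontr)
      assume "x \<noteq> y"
      then have "x - y \<noteq> 0" by simp
      then have "0 < hweight n (L (x - y))" using wprops by blast
      then have "card {c\<in>set cs. dotp (x - y) c \<noteq> 0} > 0" unfolding hwL .
      then have "{c\<in>set cs. dotp (x - y) c \<noteq> 0} \<noteq> {}" by (metis card.empty less_irrefl)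
      then obtain c where c: "c \<in> set cs" "dotp (x - y) c \<noteq> 0" by blast
      then obtain i where i: "i < n" "cs ! i = c" unfolding n_def by (metis in_set_conv_nth)
      have "L x i = L y i" using e by simp
      then have "dotp x c = dotp y c" using i unfolding L_def by simp
      then show False using c(2) by (simp add: dotp_diff_left)
    qed
  qed
  have linL: "Vector_Spaces.linear (*s) fscale L"
  proof -
    have ax: "module_hom_axioms (*s) fscale L"
    proof (rule module_hom_axioms.intro)
      fix b1 b2 :: "'a^'n"
      show "L (b1 + b2) = L b1 + L b2"
        unfolding L_def dotp_def by (auto simp: fun_eq_iff sum.distrib distrib_right)
    next
      fix r :: 'a and b :: "'a^'n"
      show "L (r *s b) = fscale r (L b)"
        unfolding L_def dotp_def fscale_def by (auto simp: fun_eq_iff sum_distrib_left mult.assoc)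
    qed
    have "module_hom (*s) fscale L"
      by (intro module_hom.intro ax) (simp_all add: module_iff_vector_space vec.vector_space_axioms fvs.vector_space_axioms)
    then show ?thesis by (rule linear_module_homI)
  qed
  have genL: "gen_code cs = range L" unfolding gen_code_def L_def n_def by blast
  interpret PP: finite_dimensional_vector_space_pair_1 "(*s)" cart_basis fscale
    by (intro finite_dimensional_vector_space_pair_1.intro vec.finite_dimensional_vector_space_axioms fvs.vector_space_axioms)
  have dimL: "code_dim (gen_code cs) = k"
  proof -
    have "fvs.dim (L ` UNIV) = vec.dim (UNIV :: ('a^'n) set)"
      by (rule PP.dim_image_eq[OF linL]) (use injL in \<open>auto intro: inj_on_subset\<close>)
    also have "\<dots> = k" unfolding k_def by (simp add: card_cart_basis)
    finally show ?thesis unfolding code_dim_def genL .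
  qed
  define d where "d = min_dist n (gen_code cs)"
  have Wset: "{hweight n c | c. c \<in> gen_code cs \<and> c \<noteq> 0} = (\<lambda>m. hweight n (L m)) ` (UNIV - {0})"
  proof -
    have "L m \<noteq> 0 \<longleftrightarrow> m \<noteq> 0" for m using injL L0 by (metis injD)
    then show ?thesis unfolding genL by auto
  qed
  obtain m0 where m0: "m0 \<noteq> 0" "d = hweight n (L m0)"
  proof -
    have ne: "(UNIV - {0}) \<noteq> ({} :: ('a^'n) set)"
    proof -
      have "axis undefined (1::'a) \<noteq> (0 :: 'a^'n)" by simp
      then show ?thesis by blast
    qed
    have "d \<in> (\<lambda>m. hweight n (L m)) ` (UNIV - {0})"
      unfolding d_def min_dist_def Wset by (rule Min_in) (use ne in simp_all)
    then show ?thesis using that by blast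
  qed
  have Dd: "int q ^ k - int q ^ (k - 1) \<le> (int q - 1) * int d + (\<Sum>i\<in>{1..h}. int q ^ u i - int q ^ (u i - 1))"
    using wprops[OF m0(1)] m0(2) by simp
  have N: "int q ^ k = (int q - 1) * int n + int q ^ u 0 + (\<Sum>i\<in>{1..h}. int q ^ u i - int q ^ u 0)"
  proof -
    have Ele: "card E \<le> q ^ k"
    proof -
      have "card E \<le> card (UNIV :: ('a^'n) set)" by (intro card_mono) simp_all
      then show ?thesis unfolding q_def k_def by simp
    qed
    have nE: "n * (q - 1) + card E = q ^ k" using cardS cardSn Ele by simp
    have "int (n * (q - 1)) + int (card E) = int q ^ k" using arg_cong[OF nE, of int] by simp
    then show ?thesis using cardE_int q2 by (simp add: of_nat_diff algebra_simps)
  qed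
  have core: "int n - (\<Sum>i<k. \<lceil>real d / real q ^ i\<rceil>) \<le> (int (card {1..h}) - 1) * int (theta q (u 0))
           - (\<Sum>j\<in>{1..h}. int (theta q (u j))) + (\<Sum>i<k. int ((\<Sum>j\<in>{1..h}. q^(u j - 1)) div q^i))"
    by (rule arith_core[OF q2 _ _ N Dd k1]) (use ui1 in auto)
  have defect: "griesmer_defect cs = int n - (\<Sum>i<k. \<lceil>real d / real q ^ i\<rceil>)"
    unfolding griesmer_defect_def griesmer_def dimL d_def n_def q_def by simp
  have ch: "int (card {1..h}) - 1 = int (h - 1)" using h2 by simp
  have thr: "(real q ^ u 0 - 1) / (real q - 1) = real (theta q (u 0))" using theta_real[OF q2] .
  show ?thesis
  proof (intro conjI allI impI)
    assume hyp: "\<forall>i\<in>{1..h}. card {j\<in>{1..h}. u j = u i} < CARD('a)"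
    have cnt: "card {j\<in>{1..h}. u j = v} < q" for v
    proof (cases "\<exists>i\<in>{1..h}. u i = v")
      case True
      then obtain i where "i \<in> {1..h}" "u i = v" by blast
      then show ?thesis using hyp q_def by auto
    next
      case False
      then have e: "{j\<in>{1..h}. u j = v} = {}" by auto
      show ?thesis unfolding e using q2 by simp
    qed
    have "(\<Sum>i<k. (\<Sum>j\<in>{1..h}. q^(u j - 1)) div q^i) \<le> (\<Sum>j\<in>{1..h}. theta q (u j))"
      by (rule tdiv_part1) (use ui1 uik cnt in auto)
    then have "(\<Sum>i<k. int ((\<Sum>j\<in>{1..h}. q^(u j - 1)) div q^i)) \<le> (\<Sum>j\<in>{1..h}. int (theta q (u j)))"
      by (simp only: of_nat_sum[symmetric] of_nat_le_iff)
    then have "griesmer_defect cs \<le> int (h - 1) * int (theta q (u 0))"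
      using core unfolding defect ch by linarith
    then have "real_of_int (griesmer_defect cs) \<le> real_of_int (int (h - 1) * int (theta q (u 0)))"
      by (simp only: of_int_le_iff)
    then have "real_of_int (griesmer_defect cs) \<le> real (h - 1) * real (theta q (u 0))"
      by simp
    then show "real_of_int (griesmer_defect cs)
              \<le> real (h - 1) * ((real CARD('a) ^ u 0 - 1) / (real CARD('a) - 1))"
      unfolding q_def[symmetric] thr .
  next
    fix w assume hw: "\<forall>i\<in>{1..h}. u i = w"
    have w1: "1 \<le> w" "w \<le> k" using ui1[of 1] uik[of 1] hw h2 by auto
    have T: "(\<Sum>j\<in>{1..h}. q^(u j - 1)) = h * q^(w - 1)" using hw by simp
    have Th: "(\<Sum>j\<in>{1..h}. int (theta q (u j))) = int h * int (theta q w)" using hw by simp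
    have p2: "(\<Sum>i<k. (h * q^(w - 1)) div q^i) = h * theta q w + (\<Sum>m\<in>{1..k-w}. h div q^m)"
      by (rule tdiv_part2[OF q2 w1])
    have "(\<Sum>i<k. int ((\<Sum>j\<in>{1..h}. q^(u j - 1)) div q^i)) = int h * int (theta q w) + (\<Sum>m\<in>{1..k-w}. int (h div q^m))"
      unfolding T using arg_cong[OF p2, of int] by simp
    then have "griesmer_defect cs \<le> int (h - 1) * int (theta q (u 0)) + (\<Sum>m\<in>{1..k-w}. int (h div q^m))"
      using core unfolding defect ch Th by linarith
    then have "real_of_int (griesmer_defect cs) \<le> real_of_int (int (h - 1) * int (theta q (u 0)) + (\<Sum>m\<in>{1..k-w}. int (h div q^m)))"
      by (simp only: of_int_le_iff)
    then have "real_of_int (griesmer_defect cs) \<le> real (h - 1) * real (theta q (u 0)) + (\<Sum>m\<in>{1..k-w}. real (h div q^m))"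
      by simp
    moreover have "(\<Sum>m\<in>{1..k-w}. real (h div q^m)) = (\<Sum>i\<in>{1..k-w}. real_of_int \<lfloor>real h / real q ^ i\<rfloor>)"
    proof (rule sum.cong)
      fix i
      have "\<lfloor>real h / real q ^ i\<rfloor> = \<lfloor>real h / real (q ^ i)\<rfloor>" by simp
      also have "\<dots> = int (h div q ^ i)" by (rule floor_divide_of_nat_eq)
      finally show "real (h div q^i) = real_of_int \<lfloor>real h / real q ^ i\<rfloor>" by simp
    qed simp
    ultimately show "real_of_int (griesmer_defect cs)
              \<le> real (h - 1) * ((real CARD('a) ^ u 0 - 1) / (real CARD('a) - 1))
                 + (\<Sum>i\<in>{1..CARD('n) - w}. real_of_int \<lfloor>real h / real CARD('a) ^ i\<rfloor>)"
      unfolding q_def[symmetric] k_def[symmetric] thr by simp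
  qed
qed

end
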